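(* Let $\mathbf{Q}=(q_{ij})_{i,j=1}^l$ be a complex matrix with $q_{ij}q_{ji}=1$. Let $V$ be any nonlocal vertex algebra and let $\psi$ be any map from $\{u^{(i)},v^{(i)}\mid i=1,\dots,l\}$ to $V$ such that for $1\le i,j\le l$ $$Y(\psi(u^{(i)}),x_1)Y(\psi(u^{(j)}),x_2)=q_{ij}Y(\psi(u^{(j)}),x_2)Y(\psi(u^{(i)}),x_1),$$ $$Y(\psi(v^{(i)}),x_1)Y(\psi(v^{(j)}),x_2)=q_{ij}Y(\psi(v^{(j)}),x_2)Y(\psi(v^{(i)}),x_1),$$ $$Y(\psi(u^{(i)}),x_1)Y(\psi(v^{(j)}),x_2)-q_{ji}Y(\psi(v^{(j)}),x_2)Y(\psi(u^{(i)}),x_1)=\delta_{ij}x_2^{-1}\delta\left(\frac{x_1}{x_2}\right).$$ Then there exists a unique nonlocal vertex algebra homomorphism from $V_{\mathbf{Q}}$ to $V$ extending $\psi$.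
   Context: $x_2^{-1}\delta(x_1/x_2)=\sum_{n\in\mathbb{Z}}x_1^nx_2^{-n-1}$. A nonlocal vertex algebra is a complex vector space $V$ with vector $\mathbf{1}$ and linear $Y:V\to\mathrm{Hom}(V,V((x)))$, $Y(v,x)=\sum_nv_nx^{-n-1}$, with $Y(\mathbf{1},x)v=v$, $Y(v,x)\mathbf{1}\in V[[x]]$ with constant term $v$, and for $u,v,w$ some $l\ge0$ with $(x_0+x_2)^lY(u,x_0+x_2)Y(v,x_2)w=(x_0+x_2)^lY(Y(u,x_0)v,x_2)w$; a homomorphism is a linear map preserving $\mathbf{1}$ and $Y$. $\mathcal{A}_{\mathbf{Q}}$ is the unital algebra with generators $X_{i,n},Y_{i,n}$ and relations $X_{i,m}X_{j,n}=q_{ij}X_{j,n}X_{i,m}$, $Y_{i,m}Y_{j,n}=q_{ij}Y_{j,n}Y_{i,m}$, $X_{i,m}Y_{j,n}-q_{ji}Y_{j,n}X_{i,m}=\delta_{ij}\delta_{m+n+1,0}$; $V_{\mathbf{Q}}=\mathcal{A}_{\mathbf{Q}}/(\mathcal{A}_{\mathbf{Q}}\mathcal{A}^+_{\mathbf{Q}})$ with $\mathcal{A}^+_{\mathbf{Q}}$ generated by $X_{i,m},Y_{i,m}$, $m\ge0$, $\mathbf{1}=1+\mathcal{A}_{\mathbf{Q}}\mathcal{A}^+_{\mathbf{Q}}$, $u^{(i)}=X_{i,-1}\mathbf{1}$, $v^{(i)}=Y_{i,-1}\mathbf{1}$; $V_{\mathbf{Q}}$ has the unique nonlocal vertex algebra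 structure with vacuum $\mathbf{1}$, $Y(u^{(i)},x)=\sum_nX_{i,n}x^{-n-1}$, $Y(v^{(i)},x)=\sum_nY_{i,n}x^{-n-1}$. *)

theory Defs
  imports Complex_Main "HOL-Library.Poly_Mapping"
begin

text \<open>The vertex operator is
  given by its modes: Y u n w stands for u_n w, i.e. Y(u,x)w = sum_n (Y u n w) x^(-n-1).

  To be able to speak about quotient spaces V/J (needed for V_Q), the axioms are
  stated modulo a subspace J; an honest nonlocal vertex algebra is the case J = {0}.\<close>

definition subspace_of :: "(complex \<Rightarrow> 'v::ab_group_add \<Rightarrow> 'v) \<Rightarrow> 'v set \<Rightarrow> bool" where
  "subspace_of s J \<longleftrightarrow> 0 \<in> J \<and> (\<forall>x\<in>J. \<forall>y\<in>J. x + y \<in> J) \<and> (\<forall>c. \<forall>x\<in>J. s c x \<in> J)"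

text \<open>Coefficient of x0^a x2^b in (x0+x2)^l Y(u,x0+x2)Y(v,x2)w: the j-th summand
  (the sum over j is finite by truncation); (x0+x2)^k with k = a+j is expanded in
  nonnegative powers of x2 with generalized binomial coefficients.\<close>
definition wa_lhs_term ::
  "(complex \<Rightarrow> 'v::ab_group_add \<Rightarrow> 'v) \<Rightarrow> ('v \<Rightarrow> int \<Rightarrow> 'v \<Rightarrow> 'v) \<Rightarrow> nat \<Rightarrow> 'v \<Rightarrow> 'v \<Rightarrow> 'v \<Rightarrow> int \<Rightarrow> int \<Rightarrow> nat \<Rightarrow> 'v" where
  "wa_lhs_term s Y l u v w a b j =
     s ((of_int (a + int j) :: complex) gchoose j)
       (Y u (int l - 1 - a - int j) (Y v (int j - b - 1) w))"

text \<open>Coefficient of x0^a x2^b in (x0+x2)^l Y(Y(u,x0)v,x2)w.\<close>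
definition wa_rhs ::
  "(complex \<Rightarrow> 'v::ab_group_add \<Rightarrow> 'v) \<Rightarrow> ('v \<Rightarrow> int \<Rightarrow> 'v \<Rightarrow> 'v) \<Rightarrow> nat \<Rightarrow> 'v \<Rightarrow> 'v \<Rightarrow> 'v \<Rightarrow> int \<Rightarrow> int \<Rightarrow> 'v" where
  "wa_rhs s Y l u v w a b =
     (\<Sum>i\<le>l. s (of_nat (l choose i)) (Y (Y u (int l - int i - 1 - a) v) (int i - b - 1) w))"

definition nlva_mod ::
  "(complex \<Rightarrow> 'v::ab_group_add \<Rightarrow> 'v) \<Rightarrow> 'v set \<Rightarrow> 'v \<Rightarrow> ('v \<Rightarrow> int \<Rightarrow> 'v \<Rightarrow> 'v) \<Rightarrow> bool" where
  "nlva_mod s J vac Y \<longleftrightarrow>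
     vector_space s \<and> subspace_of s J \<and>
     \<comment> \<open>Y is bilinear and well defined on V/J\<close>
     (\<forall>u u' n w. Y (u + u') n w - (Y u n w + Y u' n w) \<in> J) \<and>
     (\<forall>c u n w. Y (s c u) n w - s c (Y u n w) \<in> J) \<and>
     (\<forall>u n w w'. Y u n (w + w') - (Y u n w + Y u n w') \<in> J) \<and>
     (\<forall>c u n w. Y u n (s c w) - s c (Y u n w) \<in> J) \<and>
     (\<forall>u n w. u \<in> J \<longrightarrow> Y u n w \<in> J) \<and>
     (\<forall>u n w. w \<in> J \<longrightarrow> Y u n w \<in> J) \<and>
     \<comment> \<open>Y(u,x)w lies in V((x))\<close>
     (\<forall>u w. \<exists>N. \<forall>n\<ge>N. Y u n w \<in> J) \<and>
     \<comment> \<open>Y(1,x)v = v\<close>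
     (\<forall>v n. Y vac n v - (if n = -1 then v else 0) \<in> J) \<and>
     \<comment> \<open>Y(v,x)1 in V[[x]] with constant term v\<close>
     (\<forall>v n. n \<ge> 0 \<longrightarrow> Y v n vac \<in> J) \<and>
     (\<forall>v. Y v (-1) vac - v \<in> J) \<and>
     \<comment> \<open>weak associativity, coefficientwise in x0^a x2^b\<close>
     (\<forall>u v w. \<exists>l::nat. \<forall>a b.
        \<forall>\<^sub>F K in sequentially. (\<Sum>j<K. wa_lhs_term s Y l u v w a b j) - wa_rhs s Y l u v w a b \<in> J)"

definition nonlocal_va ::
  "(complex \<Rightarrow> 'v::ab_group_add \<Rightarrow> 'v) \<Rightarrow> 'v \<Rightarrow> ('v \<Rightarrow> int \<Rightarrow> 'v \<Rightarrow> 'v) \<Rightarrow> bool" where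
  "nonlocal_va s vac Y \<longleftrightarrow> nlva_mod s {0} vac Y"

text \<open>Homomorphism from the quotient (V1/J, vac1, Y1) to (V2, vac2, Y2), represented by a
  linear map on V1 vanishing on J.\<close>
definition nlva_hom_mod ::
  "(complex \<Rightarrow> 'v::ab_group_add \<Rightarrow> 'v) \<Rightarrow> 'v set \<Rightarrow> 'v \<Rightarrow> ('v \<Rightarrow> int \<Rightarrow> 'v \<Rightarrow> 'v) \<Rightarrow>
   (complex \<Rightarrow> 'w::ab_group_add \<Rightarrow> 'w) \<Rightarrow> 'w \<Rightarrow> ('w \<Rightarrow> int \<Rightarrow> 'w \<Rightarrow> 'w) \<Rightarrow> ('v \<Rightarrow> 'w) \<Rightarrow> bool" where
  "nlva_hom_mod s1 J vac1 Y1 s2 vac2 Y2 g \<longleftrightarrow>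
     (\<forall>x y. g (x + y) = g x + g y) \<and> (\<forall>c x. g (s1 c x) = s2 c (g x)) \<and>
     (\<forall>x\<in>J. g x = 0) \<and> g vac1 = vac2 \<and>
     (\<forall>u n w. g (Y1 u n w) = Y2 (g u) n (g w))"

text \<open>Generators X_{i,m} (GX i m) and Y_{i,m} (GY i m), indexed by a finite type 'l
  (standing for {1..l}).  The free algebra is spanned by words; the word [g1,...,gk]
  stands for the product g1 g2 ... gk.\<close>
datatype 'l gen = GX 'l int | GY 'l int

type_synonym 'l freealg = "'l gen list \<Rightarrow>\<^sub>0 complex"

definition cmul :: "complex \<Rightarrow> 'l freealg \<Rightarrow> 'l freealg" where
  "cmul c p = Poly_Mapping.map (\<lambda>x. c * x) p"

definition word :: "'l gen list \<Rightarrow> 'l freealg" where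
  "word w = Poly_Mapping.single w 1"

definition gmul :: "'l gen \<Rightarrow> 'l freealg \<Rightarrow> 'l freealg" where
  "gmul g p = (\<Sum>w\<in>Poly_Mapping.keys p. Poly_Mapping.single (g # w) (Poly_Mapping.lookup p w))"

text \<open>JQ Q: preimage in the free algebra of the left ideal A_Q A_Q^+ of A_Q, i.e. the
  two-sided ideal of the defining relations plus the left ideal generated by the
  X_{i,m}, Y_{i,m} with m >= 0.  V_Q = freealg / JQ Q.\<close>
inductive_set JQ :: "('l \<Rightarrow> 'l \<Rightarrow> complex) \<Rightarrow> 'l freealg set" for Q where
  zero: "0 \<in> JQ Q"
| add: "p \<in> JQ Q \<Longrightarrow> p' \<in> JQ Q \<Longrightarrow> p + p' \<in> JQ Q"
| smul: "p \<in> JQ Q \<Longrightarrow> cmul c p \<in> JQ Q"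
| relXX: "word (a @ [GX i m, GX j n] @ b) - cmul (Q i j) (word (a @ [GX j n, GX i m] @ b)) \<in> JQ Q"
| relYY: "word (a @ [GY i m, GY j n] @ b) - cmul (Q i j) (word (a @ [GY j n, GY i m] @ b)) \<in> JQ Q"
| relXY: "word (a @ [GX i m, GY j n] @ b) - cmul (Q j i) (word (a @ [GY j n, GX i m] @ b))
            - (if i = j \<and> m + n + 1 = 0 then word (a @ b) else 0) \<in> JQ Q"
| annX: "m \<ge> 0 \<Longrightarrow> word (a @ [GX i m]) \<in> JQ Q"
| annY: "m \<ge> 0 \<Longrightarrow> word (a @ [GY i m]) \<in> JQ Q"

definition vacQ :: "'l freealg" where "vacQ = word []"
definition uQ :: "'l \<Rightarrow> 'l freealg" where "uQ i = word [GX i (-1)]"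
definition vQ :: "'l \<Rightarrow> 'l freealg" where "vQ i = word [GY i (-1)]"

text \<open>YQ is (a representative of) the nonlocal vertex algebra structure on V_Q with vacuum
  vacQ and Y(u^(i),x) = sum X_{i,n} x^(-n-1), Y(v^(i),x) = sum Y_{i,n} x^(-n-1).\<close>
definition VQ_structure :: "('l \<Rightarrow> 'l \<Rightarrow> complex) \<Rightarrow> ('l freealg \<Rightarrow> int \<Rightarrow> 'l freealg \<Rightarrow> 'l freealg) \<Rightarrow> bool" where
  "VQ_structure Q YQ \<longleftrightarrow> nlva_mod cmul (JQ Q) vacQ YQ \<and>
     (\<forall>i n w. YQ (uQ i) n w - gmul (GX i n) w \<in> JQ Q) \<and>
     (\<forall>i n w. YQ (vQ i) n w - gmul (GY i n) w \<in> JQ Q)"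

end

theory Submission
  imports Defs
begin

lemma lookup_cmul: "Poly_Mapping.lookup (cmul c p) k = c * Poly_Mapping.lookup p k"
  by (simp add: cmul_def map.rep_eq when_def)

lemma pm_sum_single: "p = (\<Sum>w\<in>Poly_Mapping.keys p. Poly_Mapping.single w (Poly_Mapping.lookup p w))"
  by (rule poly_mapping_eqI) (auto simp: lookup_sum lookup_single when_def in_keys_iff)

locale tgt =
  fixes s :: "complex \<Rightarrow> 'v::ab_group_add \<Rightarrow> 'v" and vac :: 'v and Y :: "'v \<Rightarrow> int \<Rightarrow> 'v \<Rightarrow> 'v"
  assumes V: "nonlocal_va s vac Y"
begin

lemma vs: "vector_space s" using V by (simp add: nonlocal_va_def nlva_mod_def)

sublocale m: module s using vs by (simp add: module_iff_vector_space)

lemma Yadd1: "Y (u + u') n w = Y u n w + Y u' n w"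
  using V unfolding nonlocal_va_def nlva_mod_def by auto
lemma Ysm1: "Y (s c u) n w = s c (Y u n w)"
  using V unfolding nonlocal_va_def nlva_mod_def by auto
lemma Yadd2: "Y u n (w + w') = Y u n w + Y u n w'"
  using V unfolding nonlocal_va_def nlva_mod_def by auto
lemma Ysm2: "Y u n (s c w) = s c (Y u n w)"
  using V unfolding nonlocal_va_def nlva_mod_def by auto
lemma trunc: "\<exists>N. \<forall>n\<ge>N. Y u n w = 0"
  using V unfolding nonlocal_va_def nlva_mod_def by auto
lemma Yvac: "Y vac n v = (if n = -1 then v else 0)"
  using V unfolding nonlocal_va_def nlva_mod_def by auto
lemma create: "n \<ge> 0 \<Longrightarrow> Y v n vac = 0"
  using V unfolding nonlocal_va_def nlva_mod_def by auto
lemma create1: "Y v (-1) vac = v"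
  using V unfolding nonlocal_va_def nlva_mod_def by auto
lemma wa: "\<exists>l::nat. \<forall>a b. \<forall>\<^sub>F K in sequentially.
   (\<Sum>j<K. wa_lhs_term s Y l u v w a b j) = wa_rhs s Y l u v w a b"
  using V unfolding nonlocal_va_def nlva_mod_def by auto

lemma Y01[simp]: "Y 0 n w = 0"
  using Yadd1[of 0 0 n w] by simp
lemma Y02[simp]: "Y u n 0 = 0"
  using Yadd2[of u n 0 0] by simp
lemma Ydiff2: "Y u n (w - w') = Y u n w - Y u n w'"
  using Yadd2[of u n "w - w'" w'] by (simp add: algebra_simps)
lemma Ysum2: "Y u n (sum f F) = (\<Sum>x\<in>F. Y u n (f x))"
  by (induct F rule: infinite_finite_induct) (auto simp: Yadd2)


definition LS where "LS l A B W a b K = (\<Sum>j<K. wa_lhs_term s Y l A B W a b j)"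
definition NB where "NB B W = (SOME N. \<forall>n\<ge>N. Y B n W = 0)"
definition Kb where "Kb B W b = nat (NB B W + b + 1)"
definition Lf where "Lf l A B W a b = LS l A B W a b (Kb B W b)"

lemma NB: "n \<ge> NB B W \<Longrightarrow> Y B n W = 0"
  unfolding NB_def using someI_ex[OF trunc[of B W]] by blast

lemma term_zero: "j \<ge> Kb B W b \<Longrightarrow> wa_lhs_term s Y l A B W a b j = 0"
  unfolding wa_lhs_term_def Kb_def by (subst NB) auto

lemma LS_stable: "K \<ge> Kb B W b \<Longrightarrow> LS l A B W a b K = Lf l A B W a b"
proof (induction K)
  case 0 then show ?case by (simp add: Lf_def)
next
  case (Suc K)
  show ?case
  proof (cases "Suc K = Kb B W b")
    case True then show ?thesis by (simp add: Lf_def)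
  next
    case False
    then have "K \<ge> Kb B W b" using Suc by simp
    then show ?thesis using Suc by (simp add: LS_def term_zero)
  qed
qed

lemma term_rec:
  "wa_lhs_term s Y (Suc l) A B W a b (Suc j) =
   wa_lhs_term s Y l A B W (a - 1) b (Suc j) + wa_lhs_term s Y l A B W a (b - 1) j"
proof -
  have c: "(of_int (a + int (Suc j)) :: complex) gchoose Suc j
        = (of_int (a - 1 + int (Suc j)) gchoose Suc j) + (of_int (a + int j) gchoose j)"
    using gbinomial_Suc_Suc[of "of_int (a + int j) :: complex" j] by (simp add: add.commute add.left_commute)
  have e1: "int (Suc l) - 1 - a - int (Suc j) = int l - 1 - (a - 1) - int (Suc j)" by simp
  have e2: "int (Suc l) - 1 - a - int (Suc j) = int l - 1 - a - int j" by simp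
  have e3: "int (Suc j) - b - 1 = int j - (b - 1) - 1" by simp
  show ?thesis unfolding wa_lhs_term_def c m.scale_left_distrib
    by (metis e1 e2 e3)
qed

lemma term_rec0:
  "wa_lhs_term s Y (Suc l) A B W a b 0 = wa_lhs_term s Y l A B W (a - 1) b 0"
  unfolding wa_lhs_term_def by simp

lemma Lf_rec: "Lf (Suc l) A B W a b = Lf l A B W (a - 1) b + Lf l A B W a (b - 1)"
proof -
  define K where "K = Kb B W b + Kb B W (b - 1)"
  have "Lf (Suc l) A B W a b = LS (Suc l) A B W a b (Suc K)"
    by (rule LS_stable[symmetric]) (simp add: K_def)
  also have "\<dots> = LS l A B W (a - 1) b (Suc K) + LS l A B W a (b - 1) K"
    unfolding LS_def sum.lessThan_Suc_shift[of _ K] term_rec term_rec0 sum.distrib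
    by (simp add: add.assoc)
  also have "\<dots> = Lf l A B W (a - 1) b + Lf l A B W a (b - 1)"
    by (simp add: LS_stable K_def)
  finally show ?thesis .
qed


definition Mop :: "(int \<Rightarrow> int \<Rightarrow> 'v) \<Rightarrow> int \<Rightarrow> int \<Rightarrow> 'v" where
  "Mop F a b = F (a - 1) b + F a (b - 1)"
definition Rop :: "nat \<Rightarrow> (int \<Rightarrow> int \<Rightarrow> 'v) \<Rightarrow> int \<Rightarrow> int \<Rightarrow> 'v" where
  "Rop l S a b = (\<Sum>i\<le>l. s (of_nat (l choose i)) (S (a - int l + int i) (b - int i)))"

lemma Lf_pow: "(\<lambda>a b. Lf (l + k) A B W a b) = (Mop ^^ k) (\<lambda>a b. Lf l A B W a b)"
  by (induction k) (auto simp: Mop_def Lf_rec fun_eq_iff)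

lemma Rop_Suc: "Rop (Suc l) S a b = Mop (Rop l S) a b"
proof -
  have "Rop (Suc l) S a b = S (a - int l - 1) b +
     (\<Sum>i\<le>l. s (of_nat (l choose i)) (S (a - int l + int i) (b - 1 - int i))) +
     (\<Sum>i\<le>l. s (of_nat (l choose Suc i)) (S (a - int l + int i) (b - 1 - int i)))"
    unfolding Rop_def sum.atMost_Suc_shift
    by (simp add: m.scale_left_distrib sum.distrib algebra_simps)
  moreover have "Rop l S (a - 1) b = S (a - int l - 1) b +
     (\<Sum>i\<le>l. s (of_nat (l choose Suc i)) (S (a - int l + int i) (b - 1 - int i)))"
  proof -
    have z0: "l choose Suc l = 0" by simp
    have z: "s (of_nat (l choose Suc l)) x = 0" for x by (simp only: z0 of_nat_0 m.scale_zero_left)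
    have "Rop l S (a - 1) b = (\<Sum>i\<le>Suc l. s (of_nat (l choose i)) (S (a - 1 - int l + int i) (b - int i)))"
      unfolding Rop_def by (simp add: z)
    also have "\<dots> = S (a - int l - 1) b +
     (\<Sum>i\<le>l. s (of_nat (l choose Suc i)) (S (a - int l + int i) (b - 1 - int i)))"
      unfolding sum.atMost_Suc_shift by (simp add: algebra_simps z)
    finally show ?thesis .
  qed
  moreover have "Rop l S a (b - 1) =
     (\<Sum>i\<le>l. s (of_nat (l choose i)) (S (a - int l + int i) (b - 1 - int i)))"
    unfolding Rop_def by simp
  ultimately show ?thesis unfolding Mop_def by (simp add: algebra_simps)
qed

lemma Rop_pow: "Rop l S = (Mop ^^ l) S"
proof (induction l)
  case 0 show ?case by (simp add: Rop_def fun_eq_iff)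
next
  case (Suc l)
  have "Rop (Suc l) S = Mop (Rop l S)" by (simp add: fun_eq_iff Rop_Suc)
  then show ?case using Suc.IH by simp
qed

lemma Mop_diff: "(Mop ^^ k) (\<lambda>a b. F a b - G a b) = (\<lambda>a b. (Mop ^^ k) F a b - (Mop ^^ k) G a b)"
  by (induction k) (auto simp: Mop_def fun_eq_iff algebra_simps)

lemma Mop_inj:
  assumes "\<And>a b. a < a0 \<Longrightarrow> F a b = 0" and "(Mop ^^ k) F = (\<lambda>a b. 0)"
  shows "F = (\<lambda>a b. 0)"
  using assms
proof (induction k arbitrary: F)
  case 0 then show ?case by simp
next
  case (Suc k)
  have lb: "a < a0 \<Longrightarrow> Mop F a b = 0" for a b by (simp add: Mop_def Suc.prems)
  have "(Mop ^^ k) (Mop F) = (\<lambda>a b. 0)" using Suc.prems(2) by (simp only: funpow_Suc_right comp_def)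
  then have "Mop F = (\<lambda>a b. 0)"
    by (rule Suc.IH[OF lb, rotated]) 
  then have step: "F a b = - F (a - 1) (b + 1)" for a b
    unfolding Mop_def fun_eq_iff by (metis add_diff_cancel_right' add_eq_0_iff)
  have all: "\<forall>b. F (a0 + int n) b = 0" for n
  proof (induction n)
    case 0 show ?case
    proof
      fix b show "F (a0 + int 0) b = 0" using step[of a0 b] Suc.prems(1)[of "a0 - 1" "b + 1"] by simp
    qed
  next
    case (Suc n) show ?case
    proof
      fix b show "F (a0 + int (Suc n)) b = 0"
        using step[of "a0 + int (Suc n)" b] Suc.IH[rule_format, of "b+1"] by simp
    qed
  qed
  then have "F a b = 0" for a b
  proof (cases "a < a0")
    case True then show ?thesis using Suc.prems(1) by simp
  next
    case False
    then obtain n where "a = a0 + int n" by (metis add.commute diff_add_cancel not_less zle_iff_zadd)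
    then show ?thesis using all by simp
  qed
  then show ?case by auto
qed


lemma closure:
  fixes s1 :: "complex \<Rightarrow> 'w::ab_group_add \<Rightarrow> 'w" and g :: "'w \<Rightarrow> 'v"
  assumes src: "nlva_mod s1 J vac1 Y1"
    and gadd: "\<And>x y. g (x + y) = g x + g y"
    and gsm: "\<And>c x. g (s1 c x) = s c (g x)"
    and gJ: "\<And>x. x \<in> J \<Longrightarrow> g x = 0"
    and Pa: "\<And>n w. g (Y1 a n w) = Y (g a) n (g w)"
    and Pb: "\<And>n w. g (Y1 b n w) = Y (g b) n (g w)"
  shows "g (Y1 (Y1 a p b) q w) = Y (g (Y1 a p b)) q (g w)"
proof -
  interpret gh: additive g by unfold_locales (rule gadd)
  have gcong: "x - y \<in> J \<Longrightarrow> g x = g y" for x y using gJ gh.diff by force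
  define A where "A = g a"
  define B where "B = g b"
  define W where "W = g w"
  define S' where "S' = (\<lambda>\<alpha> \<beta>. g (Y1 (Y1 a (- \<alpha> - 1) b) (- \<beta> - 1) w))"
  define T where "T = (\<lambda>\<alpha> \<beta>. Y (Y A (- \<alpha> - 1) B) (- \<beta> - 1) W)"
  have JY1: "u \<in> J \<Longrightarrow> Y1 u n x \<in> J" for u n x using src unfolding nlva_mod_def by auto
  obtain N1 where N1: "\<And>n. n \<ge> N1 \<Longrightarrow> Y1 a n b \<in> J"
    using src unfolding nlva_mod_def by meson
  obtain l1 where l1: "\<And>\<alpha> \<beta>. \<forall>\<^sub>F K in sequentially.
      (\<Sum>j<K. wa_lhs_term s1 Y1 l1 a b w \<alpha> \<beta> j) - wa_rhs s1 Y1 l1 a b w \<alpha> \<beta> \<in> J"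
    using src unfolding nlva_mod_def by meson
  obtain l2 where l2: "\<And>\<alpha> \<beta>. \<forall>\<^sub>F K in sequentially.
      (\<Sum>j<K. wa_lhs_term s Y l2 A B W \<alpha> \<beta> j) = wa_rhs s Y l2 A B W \<alpha> \<beta>"
    using wa by meson
  have glhs: "g (wa_lhs_term s1 Y1 l a b w \<alpha> \<beta> j) = wa_lhs_term s Y l A B W \<alpha> \<beta> j" for l \<alpha> \<beta> j
    unfolding wa_lhs_term_def gsm Pa Pb A_def B_def W_def ..
  have grhs: "g (wa_rhs s1 Y1 l a b w \<alpha> \<beta>) = Rop l S' \<alpha> \<beta>" for l \<alpha> \<beta>
  proof -
    have e1: "int l - int i - 1 - \<alpha> = - (\<alpha> - int l + int i) - 1" for i by simp
    have e2: "int i - \<beta> - 1 = - (\<beta> - int i) - 1" for i by simp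
    show ?thesis unfolding wa_rhs_def Rop_def gh.sum gsm S'_def e1 e2 ..
  qed
  have rhsV: "wa_rhs s Y l A B W \<alpha> \<beta> = Rop l T \<alpha> \<beta>" for l \<alpha> \<beta>
  proof -
    have e1: "int l - int i - 1 - \<alpha> = - (\<alpha> - int l + int i) - 1" for i by simp
    have e2: "int i - \<beta> - 1 = - (\<beta> - int i) - 1" for i by simp
    show ?thesis unfolding wa_rhs_def Rop_def T_def e1 e2 ..
  qed
  have E1: "Lf l1 A B W \<alpha> \<beta> = Rop l1 S' \<alpha> \<beta>" for \<alpha> \<beta>
  proof -
    obtain N where N: "\<And>K. K \<ge> N \<Longrightarrow>
      (\<Sum>j<K. wa_lhs_term s1 Y1 l1 a b w \<alpha> \<beta> j) - wa_rhs s1 Y1 l1 a b w \<alpha> \<beta> \<in> J"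
      using l1[of \<alpha> \<beta>] unfolding eventually_sequentially by blast
    define K where "K = max N (Kb B W \<beta>)"
    have "Lf l1 A B W \<alpha> \<beta> = LS l1 A B W \<alpha> \<beta> K" by (simp add: LS_stable K_def)
    also have "\<dots> = g (\<Sum>j<K. wa_lhs_term s1 Y1 l1 a b w \<alpha> \<beta> j)"
      unfolding LS_def gh.sum glhs ..
    also have "\<dots> = g (wa_rhs s1 Y1 l1 a b w \<alpha> \<beta>)" by (rule gcong) (rule N, simp add: K_def)
    finally show ?thesis unfolding grhs .
  qed
  have E2: "Lf l2 A B W \<alpha> \<beta> = Rop l2 T \<alpha> \<beta>" for \<alpha> \<beta>
  proof -
    obtain N where N: "\<And>K. K \<ge> N \<Longrightarrow>
      (\<Sum>j<K. wa_lhs_term s Y l2 A B W \<alpha> \<beta> j) = wa_rhs s Y l2 A B W \<alpha> \<beta>"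
      using l2[of \<alpha> \<beta>] unfolding eventually_sequentially by blast
    define K where "K = max N (Kb B W \<beta>)"
    have "Lf l2 A B W \<alpha> \<beta> = LS l2 A B W \<alpha> \<beta> K" by (simp add: LS_stable K_def)
    also have "\<dots> = wa_rhs s Y l2 A B W \<alpha> \<beta>" unfolding LS_def by (rule N) (simp add: K_def)
    finally show ?thesis unfolding rhsV .
  qed
  have "(Mop ^^ (l1 + l2)) S' = (Mop ^^ l2) ((Mop ^^ l1) S')"
    by (simp only: funpow_add comp_apply add.commute[of l1 l2])
  also have "\<dots> = (Mop ^^ l2) (\<lambda>\<alpha> \<beta>. Lf l1 A B W \<alpha> \<beta>)"
  proof -
    have "Rop l1 S' = (\<lambda>\<alpha> \<beta>. Lf l1 A B W \<alpha> \<beta>)" using E1 by (simp add: fun_eq_iff)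
    then show ?thesis by (simp only: Rop_pow)
  qed
  also have "\<dots> = (\<lambda>\<alpha> \<beta>. Lf (l1 + l2) A B W \<alpha> \<beta>)" by (rule Lf_pow[symmetric])
  also have "\<dots> = (Mop ^^ l1) (\<lambda>\<alpha> \<beta>. Lf l2 A B W \<alpha> \<beta>)"
    using Lf_pow[of l2 l1 A B W] by (simp only: add.commute)
  also have "\<dots> = (Mop ^^ l1) ((Mop ^^ l2) T)"
  proof -
    have "Rop l2 T = (\<lambda>\<alpha> \<beta>. Lf l2 A B W \<alpha> \<beta>)" using E2 by (simp add: fun_eq_iff)
    then show ?thesis by (simp only: Rop_pow)
  qed
  also have "\<dots> = (Mop ^^ (l1 + l2)) T" by (simp only: funpow_add comp_apply)
  finally have eq: "(Mop ^^ (l1 + l2)) S' = (Mop ^^ (l1 + l2)) T" .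
  have z1: "(Mop ^^ (l1 + l2)) (\<lambda>\<alpha> \<beta>. S' \<alpha> \<beta> - T \<alpha> \<beta>) = (\<lambda>\<alpha> \<beta>. 0)"
    unfolding Mop_diff eq by simp
  have z2: "\<And>\<alpha> \<beta>. \<alpha> < - N1 \<Longrightarrow> S' \<alpha> \<beta> - T \<alpha> \<beta> = 0"
  proof -
    fix \<alpha> \<beta> :: int assume "\<alpha> < - N1"
    then have j: "Y1 a (- \<alpha> - 1) b \<in> J" by (intro N1) simp
    then have "g (Y1 a (- \<alpha> - 1) b) = 0" by (rule gJ)
    then have "Y A (- \<alpha> - 1) B = 0" using Pa by (simp add: A_def B_def)
    moreover have "S' \<alpha> \<beta> = 0" unfolding S'_def by (rule gJ, rule JY1, rule j)
    ultimately show "S' \<alpha> \<beta> - T \<alpha> \<beta> = 0" by (simp add: T_def)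
  qed
  have "(\<lambda>\<alpha> \<beta>. S' \<alpha> \<beta> - T \<alpha> \<beta>) = (\<lambda>\<alpha> \<beta>. 0)"
    by (rule Mop_inj[OF z2 z1])
  then have "S' (- p - 1) (- q - 1) = T (- p - 1) (- q - 1)" by (metis eq_iff_diff_eq_0)
  moreover have "- (- p - 1) - 1 = p" "- (- q - 1) - 1 = q" by simp_all
  ultimately have "g (Y1 (Y1 a p b) q w) = Y (Y A p B) q W" unfolding S'_def T_def by simp
  then show ?thesis by (simp add: Pa A_def B_def W_def)
qed

end

locale mainloc = tgt s vac Y
  for s :: "complex \<Rightarrow> 'v::ab_group_add \<Rightarrow> 'v" and vac Y +
  fixes Q :: "'l \<Rightarrow> 'l \<Rightarrow> complex"
    and YQ :: "'l freealg \<Rightarrow> int \<Rightarrow> 'l freealg \<Rightarrow> 'l freealg"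
    and psiu psiv :: "'l \<Rightarrow> 'v"
  assumes VQ: "VQ_structure Q YQ"
    and uu: "\<And>i j m n w. Y (psiu i) m (Y (psiu j) n w) = s (Q i j) (Y (psiu j) n (Y (psiu i) m w))"
    and vv: "\<And>i j m n w. Y (psiv i) m (Y (psiv j) n w) = s (Q i j) (Y (psiv j) n (Y (psiv i) m w))"
    and uv: "\<And>i j m n w. Y (psiu i) m (Y (psiv j) n w) - s (Q j i) (Y (psiv j) n (Y (psiu i) m w))
               = (if i = j \<and> m + n + 1 = 0 then w else 0)"
begin

fun opg :: "'l gen \<Rightarrow> 'v \<Rightarrow> 'v" where
  "opg (GX i n) x = Y (psiu i) n x"
| "opg (GY i n) x = Y (psiv i) n x"

definition gw :: "'l gen list \<Rightarrow> 'v" where "gw ws = foldr opg ws vac"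

definition gmap :: "'l freealg \<Rightarrow> 'v" where
  "gmap p = (\<Sum>w\<in>Poly_Mapping.keys p. s (Poly_Mapping.lookup p w) (gw w))"

lemma opg_add: "opg x (a + b) = opg x a + opg x b"
  by (cases x) (auto simp: Yadd2)
lemma opg_smul: "opg x (s c a) = s c (opg x a)"
  by (cases x) (auto simp: Ysm2)
lemma opg_zero: "opg x 0 = 0"
  by (cases x) auto

lemma opg_sum: "opg x (sum f F) = (\<Sum>i\<in>F. opg x (f i))"
  by (induction F rule: infinite_finite_induct) (auto simp: opg_zero opg_add)

lemma F_add: "foldr opg ws (a + b) = foldr opg ws a + foldr opg ws b"
  by (induction ws) (auto simp: opg_add)
lemma F_zero: "foldr opg ws 0 = 0"
  by (induction ws) (auto simp: opg_zero)
lemma F_diff: "foldr opg ws (a - b) = foldr opg ws a - foldr opg ws b"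
  using F_add[of ws "a - b" b] by (simp add: algebra_simps)
lemma F_smul: "foldr opg ws (s c a) = s c (foldr opg ws a)"
  by (induction ws) (auto simp: opg_smul)

lemma gw_Cons[simp]: "gw (x # ws) = opg x (gw ws)" by (simp add: gw_def)
lemma gw_Nil[simp]: "gw [] = vac" by (simp add: gw_def)

lemma gw_app: "gw (a @ b) = foldr opg a (gw b)"
  by (simp add: gw_def)

lemma gmap_superset:
  assumes "finite F" "Poly_Mapping.keys p \<subseteq> F"
  shows "gmap p = (\<Sum>w\<in>F. s (Poly_Mapping.lookup p w) (gw w))"
  unfolding gmap_def
  by (rule sum.mono_neutral_left) (use assms in \<open>auto simp: in_keys_iff\<close>)

lemma gmap_add: "gmap (p + q) = gmap p + gmap q"
proof -
  let ?F = "Poly_Mapping.keys p \<union> Poly_Mapping.keys q"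
  have "gmap (p + q) = (\<Sum>w\<in>?F. s (Poly_Mapping.lookup (p + q) w) (gw w))"
    by (rule gmap_superset) (auto simp: in_keys_iff lookup_add)
  also have "\<dots> = (\<Sum>w\<in>?F. s (Poly_Mapping.lookup p w) (gw w)) + (\<Sum>w\<in>?F. s (Poly_Mapping.lookup q w) (gw w))"
    by (simp add: lookup_add m.scale_left_distrib sum.distrib)
  also have "\<dots> = gmap p + gmap q"
    by (simp add: gmap_superset[symmetric])
  finally show ?thesis .
qed

sublocale gm: additive gmap by unfold_locales (rule gmap_add)

lemma gmap_zero[simp]: "gmap 0 = 0" by (rule gm.zero)

lemma gmap_cmul: "gmap (cmul c p) = s c (gmap p)"
proof -
  have "gmap (cmul c p) = (\<Sum>w\<in>Poly_Mapping.keys p. s (Poly_Mapping.lookup (cmul c p) w) (gw w))"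
    by (rule gmap_superset) (auto simp: in_keys_iff lookup_cmul)
  also have "\<dots> = s c (gmap p)"
    by (simp add: lookup_cmul gmap_def m.scale_sum_right)
  finally show ?thesis .
qed

lemma gmap_single: "gmap (Poly_Mapping.single w c) = s c (gw w)"
proof -
  have "gmap (Poly_Mapping.single w c) = (\<Sum>v\<in>{w}. s (Poly_Mapping.lookup (Poly_Mapping.single w c) v) (gw v))"
    by (rule gmap_superset) auto
  then show ?thesis by simp
qed

lemma gmap_word: "gmap (word w) = gw w"
  by (simp add: word_def gmap_single)

lemma single_cmul: "Poly_Mapping.single w c = cmul c (word w)"
  by (simp add: cmul_def word_def)

lemma gmap_JQ: "x \<in> JQ Q \<Longrightarrow> gmap x = 0"
proof (induction rule: JQ.induct)
  case zero then show ?case by (rule gm.zero)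
next
  case (add p p') then show ?case by (simp add: gmap_add)
next
  case (smul p c) then show ?case by (simp add: gmap_cmul)
next
  case (relXX a i m j n b) then show ?case
    by (simp add: gm.diff gmap_cmul gmap_word gw_app uu[of i m j n] F_smul)
next
  case (relYY a i m j n b) then show ?case
    by (simp add: gm.diff gmap_cmul gmap_word gw_app vv[of i m j n] F_smul)
next
  case (relXY a i m j n b)
  have "gmap (word (a @ [GX i m, GY j n] @ b)) - gmap (cmul (Q j i) (word (a @ [GY j n, GX i m] @ b)))
      = foldr opg a (if i = j \<and> m + n + 1 = 0 then gw b else 0)"
  proof -
    have 1: "gmap (word (a @ [GX i m, GY j n] @ b)) = foldr opg a (Y (psiu i) m (Y (psiv j) n (gw b)))"
      by (simp add: gmap_word gw_app)
    have 2: "gmap (cmul (Q j i) (word (a @ [GY j n, GX i m] @ b))) =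
        foldr opg a (s (Q j i) (Y (psiv j) n (Y (psiu i) m (gw b))))"
      by (simp add: gmap_cmul gmap_word gw_app F_smul)
    show ?thesis unfolding 1 2 F_diff[symmetric] uv ..
  qed
  then show ?case
    by (auto simp: gm.diff gmap_word gw_app F_zero gm.zero)
next
  case (annX m a i) then show ?case
    by (simp add: gmap_word gw_app create F_zero)
next
  case (annY m a i) then show ?case
    by (simp add: gmap_word gw_app create F_zero)
qed


lemma src: "nlva_mod cmul (JQ Q) vacQ YQ" using VQ by (simp add: VQ_structure_def)
lemma VQu: "YQ (uQ i) n w - gmul (GX i n) w \<in> JQ Q" using VQ by (simp add: VQ_structure_def)
lemma VQv: "YQ (vQ i) n w - gmul (GY i n) w \<in> JQ Q" using VQ by (simp add: VQ_structure_def)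
lemma YQadd1: "YQ (u + u') n w - (YQ u n w + YQ u' n w) \<in> JQ Q"
  using src unfolding nlva_mod_def by simp
lemma YQsm1: "YQ (cmul c u) n w - cmul c (YQ u n w) \<in> JQ Q"
  using src unfolding nlva_mod_def by simp
lemma YQJ1: "u \<in> JQ Q \<Longrightarrow> YQ u n w \<in> JQ Q"
  using src unfolding nlva_mod_def by simp
lemma YQvac: "YQ vacQ n v - (if n = -1 then v else 0) \<in> JQ Q"
  using src unfolding nlva_mod_def by simp

lemma gcong: "x - y \<in> JQ Q \<Longrightarrow> gmap x = gmap y"
  using gmap_JQ gm.diff by force

lemma gmul_word: "gmul x (word w) = word (x # w)"
  by (simp add: gmul_def word_def)

lemma gmap_gmul: "gmap (gmul x p) = opg x (gmap p)"
proof -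
  have "gmap (gmul x p) = (\<Sum>w\<in>Poly_Mapping.keys p. s (Poly_Mapping.lookup p w) (opg x (gw w)))"
    unfolding gmul_def gm.sum gmap_single by simp
  also have "\<dots> = opg x (gmap p)"
    unfolding gmap_def opg_sum by (simp add: opg_smul)
  finally show ?thesis .
qed

definition P where "P u \<longleftrightarrow> (\<forall>n w. gmap (YQ u n w) = Y (gmap u) n (gmap w))"

lemma P_add: "P u \<Longrightarrow> P u' \<Longrightarrow> P (u + u')"
  unfolding P_def using gcong[OF YQadd1] by (simp add: gmap_add Yadd1)

lemma P_cmul: "P u \<Longrightarrow> P (cmul c u)"
  unfolding P_def using gcong[OF YQsm1] by (simp add: gmap_cmul Ysm1)

lemma P_J: "P u \<Longrightarrow> e \<in> JQ Q \<Longrightarrow> P (u + e)"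
  unfolding P_def using gcong[OF YQadd1] gmap_JQ YQJ1 by (simp add: gmap_add)

lemma P_zero: "P 0"
  unfolding P_def using gmap_JQ[OF YQJ1[OF JQ.zero]] by simp

lemma P_sum: "finite F \<Longrightarrow> (\<And>x. x \<in> F \<Longrightarrow> P (f x)) \<Longrightarrow> P (sum f F)"
  by (induction F rule: finite_induct) (auto simp: P_zero P_add)

lemma P_vac: "P vacQ"
  unfolding P_def
proof (intro allI)
  fix n w
  have "gmap (YQ vacQ n w) = gmap (if n = -1 then w else 0)" by (rule gcong[OF YQvac])
  then show "gmap (YQ vacQ n w) = Y (gmap vacQ) n (gmap w)"
    by (simp add: vacQ_def gmap_word Yvac)
qed

lemma P_closure: "P a \<Longrightarrow> P b \<Longrightarrow> P (YQ a p b)"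
  unfolding P_def
  by (intro allI closure[OF src]) (auto simp: gmap_add gmap_cmul gmap_JQ)

lemma word_ident: "x - y \<in> JQ Q \<Longrightarrow> y = x + cmul (-1) (x - y)"
  by (rule poly_mapping_eqI) (simp add: lookup_cmul lookup_add lookup_minus)

lemma P_uQ: "P (uQ i)"
  unfolding P_def using gcong[OF VQu] by (simp add: gmap_gmul uQ_def gmap_word create1)
lemma P_vQ: "P (vQ i)"
  unfolding P_def using gcong[OF VQv] by (simp add: gmap_gmul vQ_def gmap_word create1)

lemma P_word: "P (word w)"
proof (induction w)
  case Nil then show ?case using P_vac by (simp add: vacQ_def)
next
  case (Cons x w)
  show ?case
  proof (cases x)
    case (GX i n)
    have d: "YQ (uQ i) n (word w) - word (x # w) \<in> JQ Q" using VQu gmul_word GX by metis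
    have "P (YQ (uQ i) n (word w))" by (rule P_closure[OF P_uQ Cons.IH])
    then show ?thesis using word_ident[OF d] P_J[OF _ JQ.smul[OF d]] by metis
  next
    case (GY i n)
    have d: "YQ (vQ i) n (word w) - word (x # w) \<in> JQ Q" using VQv gmul_word GY by metis
    have "P (YQ (vQ i) n (word w))" by (rule P_closure[OF P_vQ Cons.IH])
    then show ?thesis using word_ident[OF d] P_J[OF _ JQ.smul[OF d]] by metis
  qed
qed

lemma P_all: "P p"
  by (subst pm_sum_single, rule P_sum) (auto simp: single_cmul P_cmul P_word)

lemma uniq:
  assumes h: "nlva_hom_mod cmul (JQ Q) vacQ YQ s vac Y h"
    and hu: "\<And>i. h (uQ i) = psiu i" and hv: "\<And>i. h (vQ i) = psiv i"
  shows "h p = gmap p"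
proof -
  interpret hh: additive h by unfold_locales (use h in \<open>simp add: nlva_hom_mod_def\<close>)
  have hc: "h (cmul c x) = s c (h x)" for c x using h by (simp add: nlva_hom_mod_def)
  have hJ: "x \<in> JQ Q \<Longrightarrow> h x = 0" for x using h by (simp add: nlva_hom_mod_def)
  have hY: "h (YQ u n w) = Y (h u) n (h w)" for u n w using h by (simp add: nlva_hom_mod_def)
  have hcong: "x - y \<in> JQ Q \<Longrightarrow> h x = h y" for x y using hJ hh.diff by force
  have hw: "h (word w) = gw w" for w
  proof (induction w)
    case Nil then show ?case using h by (simp add: nlva_hom_mod_def vacQ_def)
  next
    case (Cons x w)
    show ?case
    proof (cases x)
      case (GX i n)
      have "h (word (x # w)) = h (YQ (uQ i) n (word w))"
        using hcong[OF VQu[of i n "word w"]] gmul_word GX by metis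
      then show ?thesis using hY hu Cons.IH GX by simp
    next
      case (GY i n)
      have "h (word (x # w)) = h (YQ (vQ i) n (word w))"
        using hcong[OF VQv[of i n "word w"]] gmul_word GY by metis
      then show ?thesis using hY hv Cons.IH GY by simp
    qed
  qed
  show ?thesis
    by (subst (1 2) pm_sum_single) (simp add: hh.sum gm.sum single_cmul hc gmap_cmul hw gmap_word)
qed

lemma exist: "nlva_hom_mod cmul (JQ Q) vacQ YQ s vac Y gmap \<and>
              (\<forall>i. gmap (uQ i) = psiu i \<and> gmap (vQ i) = psiv i)"
  using P_all unfolding nlva_hom_mod_def P_def
  by (auto simp: gmap_add gmap_cmul gmap_JQ vacQ_def gmap_word uQ_def vQ_def create1)

end

theorem proposition3p8:
  fixes Q :: "'l::finite \<Rightarrow> 'l \<Rightarrow> complex"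
    and YQ :: "'l freealg \<Rightarrow> int \<Rightarrow> 'l freealg \<Rightarrow> 'l freealg"
    and s :: "complex \<Rightarrow> 'v::ab_group_add \<Rightarrow> 'v"
    and vac :: 'v and Y :: "'v \<Rightarrow> int \<Rightarrow> 'v \<Rightarrow> 'v"
    and psiu psiv :: "'l \<Rightarrow> 'v"
  assumes Q: "\<And>i j. Q i j * Q j i = 1"
    and VQ: "VQ_structure Q YQ"
    and V: "nonlocal_va s vac Y"
    and uu: "\<And>i j m n w. Y (psiu i) m (Y (psiu j) n w) = s (Q i j) (Y (psiu j) n (Y (psiu i) m w))"
    and vv: "\<And>i j m n w. Y (psiv i) m (Y (psiv j) n w) = s (Q i j) (Y (psiv j) n (Y (psiv i) m w))"
    and uv: "\<And>i j m n w. Y (psiu i) m (Y (psiv j) n w) - s (Q j i) (Y (psiv j) n (Y (psiu i) m w))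
               = (if i = j \<and> m + n + 1 = 0 then w else 0)"
  shows "\<exists>!g. nlva_hom_mod cmul (JQ Q) vacQ YQ s vac Y g \<and>
              (\<forall>i. g (uQ i) = psiu i \<and> g (vQ i) = psiv i)"
proof -
  interpret ml: mainloc s vac Y Q YQ psiu psiv
    by (unfold_locales; (rule V | rule VQ | rule uu | rule vv | rule uv))
  show ?thesis
  proof (rule ex1I[of _ ml.gmap])
    show "nlva_hom_mod cmul (JQ Q) vacQ YQ s vac Y ml.gmap \<and>
              (\<forall>i. ml.gmap (uQ i) = psiu i \<and> ml.gmap (vQ i) = psiv i)" by (rule ml.exist)
  next
    fix h assume "nlva_hom_mod cmul (JQ Q) vacQ YQ s vac Y h \<and>
              (\<forall>i. h (uQ i) = psiu i \<and> h (vQ i) = psiv i)"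
    then show "h = ml.gmap" using ml.uniq by blast
  qed
qed

end
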